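(* Let $0\le\lambda<\gamma\le\delta$. Let $\mathfrak{f}\in\mathcal{R}_H^0(\gamma,\delta,\lambda)$ and let $\varphi\in\mathcal{K}$. Then $\mathfrak{f}\,\widetilde{\ast}\,\varphi\in\mathcal{R}_H^0(\gamma,\delta,\lambda)$.
   Context: Let $\mathcal{U}=\{z\in\mathbb{C}:|z|<1\}$. $\mathcal{K}$ is the class of analytic univalent functions $\varphi$ in $\mathcal{U}$ with $\varphi(0)=0$, $\varphi'(0)=1$ that map $\mathcal{U}$ onto a convex domain. $\mathcal{H}^0$ denotes the class of complex-valued harmonic functions $\mathfrak{f}=\mathfrak{s}+\overline{\mathfrak{t}}$ on $\mathcal{U}$, where $\mathfrak{s}(z)=z+\sum_{m\ge2}a_mz^m$ and $\mathfrak{t}(z)=\sum_{m\ge2}b_mz^m$ are analytic in $\mathcal{U}$. For real $0\le\lambda<\gamma\le\delta$, $\mathcal{R}_H^0(\gamma,\delta,\lambda)$ is the class of $\mathfrak{f}=\mathfrak{s}+\overline{\mathfrak{t}}\in\mathcal{H}^0$ such that for all $z\in\mathcal{U}$, $\mathrm{Re}\left[\gamma\mathfrak{s}'(z)+\delta z\mathfrak{s}''(z)+\frac{\delta-\gamma}{2}z^2\mathfrak{s}'''(z)-\lambda\right]>\left|\gamma\mathfrak{t}'(z)+\delta z\mathfrak{t}''(z)+\frac{\delta-\gamma}{2}z^2\mathfrak{t}'''(z)\right|$. For analytic $g(z)=\sum c_mz^m$, $h(z)=\sum d_mz^m$, $(g\ast h)(z)=\sum c_md_mz^m$. For harmonic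 $\mathfrak{f}=\mathfrak{s}+\overline{\mathfrak{t}}$ and analytic $\varphi$, $\mathfrak{f}\,\widetilde{\ast}\,\varphi=\mathfrak{s}\ast\varphi+\overline{\mathfrak{t}\ast\varphi}$. *)

theory Defs
  imports "HOL-Complex_Analysis.Complex_Analysis"
begin

definition tcoeff :: "(complex \<Rightarrow> complex) \<Rightarrow> nat \<Rightarrow> complex" where
  "tcoeff g n = (deriv ^^ n) g 0 / of_nat (fact n)"

definition hadamard :: "(complex \<Rightarrow> complex) \<Rightarrow> (complex \<Rightarrow> complex) \<Rightarrow> complex \<Rightarrow> complex" where
  "hadamard g h z = (\<Sum>m. tcoeff g m * tcoeff h m * z ^ m)"

definition convK :: "(complex \<Rightarrow> complex) \<Rightarrow> bool" where
  "convK \<phi> \<longleftrightarrow> \<phi> holomorphic_on ball 0 1 \<and> \<phi> 0 = 0 \<and> deriv \<phi> 0 = 1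
     \<and> inj_on \<phi> (ball 0 1) \<and> convex (\<phi> ` ball 0 1)"

text \<open>Class H^0: harmonic f = s + conj t given by the pair (s, t) of analytic functions
  with s(z) = z + ..., t(z) = b_2 z^2 + ...\<close>
definition classH0 :: "(complex \<Rightarrow> complex) \<Rightarrow> (complex \<Rightarrow> complex) \<Rightarrow> bool" where
  "classH0 s t \<longleftrightarrow> s holomorphic_on ball 0 1 \<and> t holomorphic_on ball 0 1
     \<and> s 0 = 0 \<and> deriv s 0 = 1 \<and> t 0 = 0 \<and> deriv t 0 = 0"

definition Lop :: "real \<Rightarrow> real \<Rightarrow> (complex \<Rightarrow> complex) \<Rightarrow> complex \<Rightarrow> complex" where
  "Lop \<gamma> \<delta> g z = of_real \<gamma> * deriv g z + of_real \<delta> * z * (deriv ^^ 2) g z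
      + of_real ((\<delta> - \<gamma>) / 2) * z ^ 2 * (deriv ^^ 3) g z"

definition RH0 :: "real \<Rightarrow> real \<Rightarrow> real \<Rightarrow> (complex \<Rightarrow> complex) \<Rightarrow> (complex \<Rightarrow> complex) \<Rightarrow> bool" where
  "RH0 \<gamma> \<delta> lam s t \<longleftrightarrow> classH0 s t \<and>
     (\<forall>z\<in>ball 0 1. Re (Lop \<gamma> \<delta> s z - of_real lam) > norm (Lop \<gamma> \<delta> t z))"

end

theory Submission
  imports Defs
begin

definition E :: "real \<Rightarrow> complex" where "E s = exp (2 * of_real pi * \<i> * of_real s)"
lemma circle_coeff:
  assumes "g holomorphic_on ball 0 R" "0 < r" "r < R"
  shows "((\<lambda>s. g (of_real r * E s) / (of_real r * E s)^k) has_integral ((deriv^^k) g 0 / fact k)) {0..1}"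
proof -
  have sub: "cball 0 r \<subseteq> ball (0::complex) R" using assms(3) by auto
  have c: "continuous_on (cball 0 r) g"
    using holomorphic_on_imp_continuous_on[OF holomorphic_on_subset[OF assms(1) sub]] .
  have h: "g holomorphic_on ball 0 r"
    using assms(1) holomorphic_on_subset sub ball_subset_cball by blast
  from Cauchy_has_contour_integral_higher_derivative_circlepath[OF c h, of 0 k] assms(2)
  have "((\<lambda>u. g u / (u - 0) ^ Suc k) has_contour_integral 2 * pi * \<i> / fact k * (deriv ^^ k) g 0) (circlepath 0 r)"
    by simp
  then have H: "((\<lambda>x. g (circlepath 0 r x) / (circlepath 0 r x - 0) ^ Suc k * (2 * complex_of_real pi * \<i> * complex_of_real r * exp (2 * complex_of_real pi * \<i> * complex_of_real x))) has_integral (2 * pi * \<i>) * ((deriv ^^ k) g 0 / fact k)) {0..1}"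
    unfolding has_contour_integral vector_derivative_circlepath by simp
  have eq: "g (circlepath 0 r x) / (circlepath 0 r x - 0) ^ Suc k * (2 * complex_of_real pi * \<i> * complex_of_real r * exp (2 * complex_of_real pi * \<i> * complex_of_real x)) =
         (2 * pi * \<i>) * (g (complex_of_real r * E x) / (complex_of_real r * E x) ^ k)" for x
  proof -
    have "E x \<noteq> 0" by (simp add: E_def)
    then show ?thesis
      using assms(2) unfolding circlepath E_def[symmetric] by (simp add: field_simps power_mult_distrib)
  qed
  have "((\<lambda>x. (2 * pi * \<i>) * (g (of_real r * E x) / (of_real r * E x)^k)) has_integral (2 * pi * \<i>) * ((deriv ^^ k) g 0 / fact k)) {0..1}"
    using H unfolding eq .
  from has_integral_mult_right[OF this, of "1/(2*pi*\<i>)"] show ?thesis by simp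
qed

definition had :: "complex fps \<Rightarrow> complex fps \<Rightarrow> complex fps" where
  "had A B = Abs_fps (\<lambda>n. fps_nth A n * fps_nth B n)"

lemma had_nth [simp]: "fps_nth (had A B) n = fps_nth A n * fps_nth B n"
  by (simp add: had_def)

lemma norm_lt_radius: "1 \<le> fps_conv_radius Q \<Longrightarrow> norm (w::complex) < 1 \<Longrightarrow> ereal (norm w) < fps_conv_radius Q"
proof -
  assume a: "1 \<le> fps_conv_radius Q" "norm w < 1"
  have "ereal (norm w) < 1" using a(2) by simp
  then show ?thesis using a(1) by (rule less_le_trans)
qed

lemma ball_sub_eball: "1 \<le> fps_conv_radius Q \<Longrightarrow> ball 0 1 \<subseteq> eball (0::complex) (fps_conv_radius Q)"
  using norm_lt_radius by (auto simp: subset_eq)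

lemma radius_had:
  assumes rA: "1 \<le> fps_conv_radius A" and rB: "1 \<le> fps_conv_radius B"
  shows "1 \<le> fps_conv_radius (had A B)"
  unfolding fps_conv_radius_def
proof (rule conv_radius_geI_ex')
  fix r :: real assume r: "0 < r" "ereal r < 1"
  define \<rho> where "\<rho> = sqrt r"
  have \<rho>: "0 < \<rho>" "\<rho> < 1" using r by (auto simp: \<rho>_def real_sqrt_lt_1_iff)
  have "summable (\<lambda>n. fps_nth A n * of_real \<rho> ^ n)"
    by (rule summable_fps) (use \<rho> norm_lt_radius[OF rA, of "of_real \<rho>"] in simp)
  then have "(\<lambda>n. fps_nth A n * of_real \<rho> ^ n) \<longlonglongrightarrow> 0"
    by (rule summable_LIMSEQ_zero)
  then have "Bseq (\<lambda>n. fps_nth A n * of_real \<rho> ^ n)" using convergent_imp_Bseq convergentI by blast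
  then obtain M where M: "M > 0" "\<And>n. norm (fps_nth A n * of_real \<rho> ^ n) \<le> M"
    unfolding Bseq_def by blast
  have sB: "summable (\<lambda>n. norm (fps_nth B n * of_real \<rho> ^ n))"
    by (rule norm_summable_fps) (use \<rho> norm_lt_radius[OF rB, of "of_real \<rho>"] in simp)
  show "summable (\<lambda>n. fps_nth (had A B) n * of_real r ^ n)"
  proof (rule summable_comparison_test)
    show "\<exists>N. \<forall>n\<ge>N. norm (fps_nth (had A B) n * of_real r ^ n) \<le> M * norm (fps_nth B n * of_real \<rho> ^ n)"
    proof (intro exI allI impI)
      fix n :: nat
      have rr: "(of_real r :: complex) ^ n = of_real \<rho> ^ n * of_real \<rho> ^ n"
        using r by (simp add: \<rho>_def power_mult_distrib[symmetric] flip: of_real_mult)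
      have "norm (fps_nth (had A B) n * of_real r ^ n) = norm (fps_nth A n * of_real \<rho> ^ n) * norm (fps_nth B n * of_real \<rho> ^ n)"
        by (simp add: rr norm_mult mult_ac)
      also have "\<dots> \<le> M * norm (fps_nth B n * of_real \<rho> ^ n)"
        by (rule mult_right_mono[OF M(2)]) simp
      finally show "norm (fps_nth (had A B) n * of_real r ^ n) \<le> M * norm (fps_nth B n * of_real \<rho> ^ n)" .
    qed
    show "summable (\<lambda>n. M * norm (fps_nth B n * of_real \<rho> ^ n))"
      by (rule summable_mult[OF sB])
  qed
qed

lemma norm_E [simp]: "norm (E s) = 1"
  by (simp add: E_def norm_exp_eq_Re)

lemma E_nonzero [simp]: "E s \<noteq> 0"
  by (simp add: E_def)

lemma cnj_E: "cnj (E s) = inverse (E s)"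
  by (simp add: E_def exp_cnj exp_minus[symmetric])

lemma continuous_E [continuous_intros]: "continuous_on S E"
  unfolding E_def by (intro continuous_intros)

lemma hol_eval_fps_ball: "1 \<le> fps_conv_radius Q \<Longrightarrow> eval_fps Q holomorphic_on ball 0 1"
  by (rule holomorphic_on_eval_fps[OF ball_sub_eball])

lemma mean_Q:
  assumes rQ: "1 \<le> fps_conv_radius Q" and \<rho>: "0 < \<rho>" "\<rho> < 1"
  shows "((\<lambda>s. eval_fps Q (of_real \<rho> * E s)) has_integral fps_nth Q 0) {0..1}"
  using circle_coeff[OF hol_eval_fps_ball[OF rQ] \<rho>, of 0] by (simp add: eval_fps_at_0)

lemma coeff_Q:
  assumes rQ: "1 \<le> fps_conv_radius Q" and \<rho>: "0 < \<rho>" "\<rho> < 1"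
  shows "((\<lambda>s. eval_fps Q (of_real \<rho> * E s) / (of_real \<rho> * E s) ^ k) has_integral fps_nth Q k) {0..1}"
proof -
  have "(0::ereal) < 1" by simp
  then have "fps_conv_radius Q > 0" using rQ by (rule less_le_trans)
  then have "fps_nth Q k = (deriv ^^ k) (eval_fps Q) 0 / fact k" by (rule fps_nth_conv_deriv)
  then show ?thesis using circle_coeff[OF hol_eval_fps_ball[OF rQ] \<rho>, of k] by simp
qed

lemma cont_eval_circle:
  assumes rQ: "1 \<le> fps_conv_radius Q" and \<rho>: "0 \<le> \<rho>" "\<rho> < 1"
  shows "continuous_on S (\<lambda>s. eval_fps Q (of_real \<rho> * E s))"
proof (rule continuous_on_eval_fps')
  show "continuous_on S (\<lambda>s. of_real \<rho> * E s)" by (intro continuous_intros)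
  show "(\<lambda>s. of_real \<rho> * E s) ` S \<subseteq> eball 0 (fps_conv_radius Q)"
  proof
    fix x assume "x \<in> (\<lambda>s. of_real \<rho> * E s) ` S"
    then obtain s where x: "x = of_real \<rho> * E s" by blast
    have "norm x < 1" using \<rho> by (simp add: x norm_mult)
    then show "x \<in> eball 0 (fps_conv_radius Q)" using ball_sub_eball[OF rQ] by auto
  qed
qed

lemma key_I1:
  fixes Q P :: "complex fps" and z :: complex and \<rho> :: real
  assumes rQ: "1 \<le> fps_conv_radius Q" and rP: "1 \<le> fps_conv_radius P"
    and z: "norm z < \<rho>" and \<rho>1: "\<rho> < 1"
  shows "((\<lambda>s. eval_fps Q (of_real \<rho> * E s) * eval_fps P (z / (of_real \<rho> * E s))) has_integral eval_fps (had Q P) z) {0..1}"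
proof -
  have \<rho>0: "0 < \<rho>" using order.strict_trans1[OF norm_ge_zero z] .
  define q where "q s = eval_fps Q (of_real \<rho> * E s)" for s
  define w where "w s = z / (of_real \<rho> * E s)" for s
  have nw: "norm (w s) = norm z / \<rho>" for s
    using \<rho>0 by (simp add: w_def norm_divide norm_mult)
  have nw1: "norm z / \<rho> < 1" using z \<rho>0 by simp
  have cq: "continuous_on {0..1} q" 
    unfolding q_def by (rule cont_eval_circle[OF rQ _ \<rho>1]) (use \<rho>0 in simp)
  obtain B where B: "\<And>s. s \<in> {0..1} \<Longrightarrow> norm (q s) \<le> B"
    using compact_imp_bounded[OF compact_continuous_image[OF cq compact_Icc]] 
    unfolding bounded_iff by (metis image_eqI)
  define f where "f i s = q s * (fps_nth P i * w s ^ i)" for i s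
  define M where "M i = B * norm (fps_nth P i * of_real (norm z / \<rho>) ^ i)" for i
  have fM: "norm (f i s) \<le> M i" if "s \<in> {0..1}" for i s
  proof -
    have "norm (f i s) = norm (q s) * norm (fps_nth P i * of_real (norm z / \<rho>) ^ i)"
      using \<rho>0 by (simp add: f_def norm_mult norm_power nw norm_divide)
    also have "\<dots> \<le> B * norm (fps_nth P i * of_real (norm z / \<rho>) ^ i)"
      by (rule mult_right_mono[OF B[OF that]]) simp
    finally show ?thesis by (simp add: M_def)
  qed
  have sM: "summable M"
  proof -
    have "summable (\<lambda>i. norm (fps_nth P i * of_real (norm z / \<rho>) ^ i))"
      by (rule norm_summable_fps) (use norm_lt_radius[OF rP, of "of_real (norm z / \<rho>)"] nw1 \<rho>0 in \<open>simp add: norm_divide\<close>)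
    then show ?thesis unfolding M_def by (rule summable_mult)
  qed
  have U: "uniform_limit {0..1} (\<lambda>n s. \<Sum>i<n. f i s) (\<lambda>s. \<Sum>i. f i s) sequentially"
    by (rule Weierstrass_m_test[OF fM sM])
  have lim_eq: "(\<Sum>i. f i s) = q s * eval_fps P (w s)" for s
  proof -
    have "summable (\<lambda>i. fps_nth P i * w s ^ i)"
      by (rule summable_fps) (use norm_lt_radius[OF rP, of "w s"] nw1 nw in simp)
    then have "(\<Sum>i. q s * (fps_nth P i * w s ^ i)) = q s * (\<Sum>i. fps_nth P i * w s ^ i)"
      by (rule suminf_mult)
    then show ?thesis by (simp add: f_def eval_fps_def)
  qed
  have cw: "continuous_on {0..1} w"
    unfolding w_def by (intro continuous_intros) (use \<rho>0 in simp)
  have cf: "continuous_on {0..1} (\<lambda>s. \<Sum>i<n. f i s)" for n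
    unfolding f_def by (intro continuous_intros cq cw)
  obtain I J where IJ: "\<And>n. ((\<lambda>s. \<Sum>i<n. f i s) has_integral I n) {0..1}"
     "((\<lambda>s. \<Sum>i. f i s) has_integral J) {0..1}" "I \<longlonglongrightarrow> J"
    using uniform_limit_integral[OF U cf] by auto
  have In: "I n = (\<Sum>i<n. fps_nth (had Q P) i * z ^ i)" for n
  proof -
    have "((\<lambda>s. f i s) has_integral fps_nth (had Q P) i * z ^ i) {0..1}" for i
    proof -
      have "((\<lambda>s. (fps_nth P i * z ^ i) * (q s / (of_real \<rho> * E s) ^ i)) has_integral (fps_nth P i * z ^ i) * fps_nth Q i) {0..1}"
        unfolding q_def by (rule has_integral_mult_right[OF coeff_Q[OF rQ \<rho>0 \<rho>1]])
      moreover have "(fps_nth P i * z ^ i) * (q s / (of_real \<rho> * E s) ^ i) = f i s" for s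
        by (simp add: f_def w_def power_divide)
      ultimately show ?thesis by (simp add: mult_ac)
    qed
    then have "((\<lambda>s. \<Sum>i<n. f i s) has_integral (\<Sum>i<n. fps_nth (had Q P) i * z ^ i)) {0..1}"
      by (intro has_integral_sum) auto
    then show ?thesis using IJ(1) has_integral_unique by blast
  qed
  have "(\<lambda>i. fps_nth (had Q P) i * z ^ i) sums eval_fps (had Q P) z"
    by (rule sums_eval_fps) (use norm_lt_radius[OF radius_had[OF rQ rP], of z] z \<rho>1 in simp)
  then have "I \<longlonglongrightarrow> eval_fps (had Q P) z"
    unfolding sums_def In .
  then have "J = eval_fps (had Q P) z" using IJ(3) LIMSEQ_unique by blast
  with IJ(2) show ?thesis
    by (simp add: lim_eq q_def w_def)
qed

definition fcnj :: "complex fps \<Rightarrow> complex fps" where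
  "fcnj P = Abs_fps (\<lambda>n. cnj (fps_nth P n))"

lemma fcnj_nth [simp]: "fps_nth (fcnj P) n = cnj (fps_nth P n)"
  by (simp add: fcnj_def)

lemma radius_fcnj [simp]: "fps_conv_radius (fcnj P) = fps_conv_radius P"
  unfolding fps_conv_radius_def by (rule conv_radius_cong) simp

lemma eval_fcnj:
  assumes rP: "1 \<le> fps_conv_radius P" and v: "norm v < 1"
  shows "cnj (eval_fps (fcnj P) v) = eval_fps P (cnj v)"
proof -
  have "(\<lambda>n. fps_nth (fcnj P) n * v ^ n) sums eval_fps (fcnj P) v"
    by (rule sums_eval_fps) (use norm_lt_radius[OF rP, of v] v in simp)
  then have "(\<lambda>n. cnj (fps_nth (fcnj P) n * v ^ n)) sums cnj (eval_fps (fcnj P) v)"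
    by (simp only: sums_cnj)
  then have 1: "(\<lambda>n. fps_nth P n * cnj v ^ n) sums cnj (eval_fps (fcnj P) v)"
    by simp
  have 2: "(\<lambda>n. fps_nth P n * cnj v ^ n) sums eval_fps P (cnj v)"
    by (rule sums_eval_fps) (use norm_lt_radius[OF rP, of "cnj v"] v in simp)
  show ?thesis using sums_unique2[OF 1 2] .
qed

lemma key_I2:
  fixes Q P :: "complex fps" and z :: complex and \<rho> :: real
  assumes rQ: "1 \<le> fps_conv_radius Q" and rP: "1 \<le> fps_conv_radius P" and P0: "fps_nth P 0 = 1"
    and z: "norm z < \<rho>" and \<rho>1: "\<rho> < 1"
  shows "((\<lambda>s. cnj (eval_fps Q (of_real \<rho> * E s)) * eval_fps P (z / (of_real \<rho> * E s))) has_integral cnj (fps_nth Q 0)) {0..1}"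
proof -
  have \<rho>0: "0 < \<rho>" using order.strict_trans1[OF norm_ge_zero z] .
  define m where "m = max (norm z) (\<rho>^2)"
  have m0: "0 < m" using \<rho>0 by (simp add: m_def less_max_iff_disj)
  have m\<rho>: "m < \<rho>" using z \<rho>0 \<rho>1 by (simp add: m_def power2_eq_square)
  define R where "R = \<rho> / m"
  have R1: "1 < R" using m0 m\<rho> by (simp add: R_def)
  define G where "G u = eval_fps Q (of_real \<rho> * u) * eval_fps (fcnj P) (cnj z * u / of_real \<rho>)" for u
  have b1: "norm (of_real \<rho> * u) < 1" if "u \<in> ball 0 R" for u :: complex
  proof -
    have "norm (of_real \<rho> * u) = \<rho> * norm u" using \<rho>0 by (simp add: norm_mult)
    also have "\<dots> < \<rho> * R" using that \<rho>0 by simp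
    also have "\<rho> * R \<le> 1"
    proof -
      have "\<rho>^2 \<le> m" by (simp add: m_def)
      then have "\<rho> * \<rho> \<le> m" by (simp add: power2_eq_square)
      then show ?thesis using m0 \<rho>0 by (simp add: R_def field_simps)
    qed
    finally show ?thesis .
  qed
  have b2: "norm (cnj z * u / of_real \<rho>) < 1" if "u \<in> ball 0 R" for u :: complex
  proof -
    have "norm (cnj z * u / of_real \<rho>) = norm z * norm u / \<rho>" using \<rho>0 by (simp add: norm_mult norm_divide)
    also have "\<dots> \<le> m * norm u / \<rho>"
      using \<rho>0 by (intro divide_right_mono mult_right_mono) (auto simp: m_def)
    also have "\<dots> < m * R / \<rho>"
      using that \<rho>0 m0 by (intro divide_strict_right_mono mult_strict_left_mono) auto
    also have "\<dots> = 1" using m0 \<rho>0 by (simp add: R_def)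
    finally show ?thesis .
  qed
  have holG: "G holomorphic_on ball 0 R"
  proof -
    have h1: "(\<lambda>u. eval_fps Q (of_real \<rho> * u)) holomorphic_on ball 0 R"
    proof (rule holomorphic_on_compose_gen[unfolded o_def, of "\<lambda>u::complex. of_real \<rho> * u" _ "eval_fps Q" "ball 0 1"])
      show "(\<lambda>u::complex. of_real \<rho> * u) holomorphic_on ball 0 R" by (intro holomorphic_intros)
      show "eval_fps Q holomorphic_on ball 0 1" by (rule hol_eval_fps_ball[OF rQ])
      show "(\<lambda>u::complex. of_real \<rho> * u) ` ball 0 R \<subseteq> ball 0 1" using b1 by (auto simp: dist_0_norm)
    qed
    have h2: "(\<lambda>u. eval_fps (fcnj P) (cnj z * u / of_real \<rho>)) holomorphic_on ball 0 R"
    proof (rule holomorphic_on_compose_gen[unfolded o_def, of "\<lambda>u::complex. cnj z * u / of_real \<rho>" _ "eval_fps (fcnj P)" "ball 0 1"])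
      show "(\<lambda>u::complex. cnj z * u / of_real \<rho>) holomorphic_on ball 0 R" by (intro holomorphic_intros) (use \<rho>0 in simp)
      show "eval_fps (fcnj P) holomorphic_on ball 0 1" by (rule hol_eval_fps_ball) (simp add: rP)
      show "(\<lambda>u::complex. cnj z * u / of_real \<rho>) ` ball 0 R \<subseteq> ball 0 1" using b2 by (auto simp: dist_0_norm)
    qed
    show ?thesis unfolding G_def by (intro holomorphic_intros h1 h2)
  qed
  have "((\<lambda>s. G (of_real 1 * E s) / (of_real 1 * E s) ^ 0) has_integral (deriv ^^ 0) G 0 / fact 0) {0..1}"
    by (rule circle_coeff[OF holG]) (use R1 in auto)
  then have "((\<lambda>s. G (E s)) has_integral fps_nth Q 0) {0..1}"
    by (simp add: G_def eval_fps_at_0 P0)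
  then have H: "((cnj \<circ> (\<lambda>s. G (E s))) has_integral cnj (fps_nth Q 0)) {0..1}"
    by (simp only: has_integral_cnj)
  have eq: "(cnj \<circ> (\<lambda>s. G (E s))) s = cnj (eval_fps Q (of_real \<rho> * E s)) * eval_fps P (z / (of_real \<rho> * E s))" for s
  proof -
    have nE: "norm (cnj z * E s / of_real \<rho>) < 1" using b2[of "E s"] R1 by simp
    have "cnj (cnj z * E s / of_real \<rho>) = z / (of_real \<rho> * E s)"
      by (simp add: cnj_E field_simps)
    then show ?thesis
      using eval_fcnj[OF rP nE] by (simp add: G_def)
  qed
  show ?thesis using H unfolding eq[abs_def] .
qed

lemma key_ns:
  fixes Q P :: "complex fps" and z :: complex and \<rho> :: real
  assumes rQ: "1 \<le> fps_conv_radius Q" and rP: "1 \<le> fps_conv_radius P" and P0: "fps_nth P 0 = 1"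
    and PRe: "\<And>w. norm w < 1 \<Longrightarrow> 1/2 \<le> Re (eval_fps P w)"
    and z: "norm z < \<rho>" and \<rho>1: "\<rho> < 1"
    and QRe: "\<And>s. 0 \<le> Re (eval_fps Q (of_real \<rho> * E s))"
  shows "0 \<le> Re (eval_fps (had Q P) z)"
proof -
  have \<rho>0: "0 < \<rho>" using order.strict_trans1[OF norm_ge_zero z] .
  define q where "q s = eval_fps Q (of_real \<rho> * E s)" for s
  define p where "p s = eval_fps P (z / (of_real \<rho> * E s))" for s
  have S: "((\<lambda>s. q s * p s + cnj (q s) * p s) has_integral eval_fps (had Q P) z + cnj (fps_nth Q 0)) {0..1}"
    unfolding q_def p_def by (rule has_integral_add[OF key_I1[OF rQ rP z \<rho>1] key_I2[OF rQ rP P0 z \<rho>1]])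
  have S': "((\<lambda>s. 2 * Re (q s) * Re (p s)) has_integral Re (eval_fps (had Q P) z) + Re (fps_nth Q 0)) {0..1}"
  proof -
    have "((Re \<circ> (\<lambda>s. q s * p s + cnj (q s) * p s)) has_integral Re (eval_fps (had Q P) z + cnj (fps_nth Q 0))) {0..1}"
      by (rule has_integral_linear[OF S bounded_linear_Re])
    moreover have "(Re \<circ> (\<lambda>s. q s * p s + cnj (q s) * p s)) = (\<lambda>s. 2 * Re (q s) * Re (p s))"
    proof (rule ext)
      fix s
      have "q s * p s + cnj (q s) * p s = (q s + cnj (q s)) * p s" by (simp add: algebra_simps)
      also have "\<dots> = of_real (2 * Re (q s)) * p s" by (simp only: complex_add_cnj)
      finally show "(Re \<circ> (\<lambda>s. q s * p s + cnj (q s) * p s)) s = 2 * Re (q s) * Re (p s)" by simp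
    qed
    ultimately show ?thesis by simp
  qed
  have I0: "((\<lambda>s. Re (q s)) has_integral Re (fps_nth Q 0)) {0..1}"
    using has_integral_linear[OF mean_Q[OF rQ \<rho>0 \<rho>1] bounded_linear_Re] by (simp add: q_def o_def)
  have le: "Re (q s) \<le> 2 * Re (q s) * Re (p s)" for s
  proof -
    have "norm (z / (of_real \<rho> * E s)) < 1" using \<rho>0 z by (simp add: norm_divide norm_mult)
    then have "1/2 \<le> Re (p s)" unfolding p_def by (rule PRe)
    moreover have "0 \<le> Re (q s)" unfolding q_def by (rule QRe)
    ultimately have "Re (q s) * 1 \<le> Re (q s) * (2 * Re (p s))"
      by (intro mult_left_mono) auto
    then show ?thesis by (simp add: mult_ac)
  qed
  have "Re (fps_nth Q 0) \<le> Re (eval_fps (had Q P) z) + Re (fps_nth Q 0)"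
    by (rule has_integral_le[OF I0 S' le])
  then show ?thesis by simp
qed

lemma schwarz_pick0:
  fixes g :: "complex \<Rightarrow> complex"
  assumes holg: "g holomorphic_on ball 0 1" and g1: "\<And>\<eta>. norm \<eta> < 1 \<Longrightarrow> norm (g \<eta>) < 1"
    and \<eta>: "norm \<eta> < 1"
  shows "(1 - (norm \<eta>)^2) * (norm (1 - cnj (g 0) * g \<eta>))^2 \<le> (1 - (norm (g 0))^2) * (1 - (norm (g \<eta>))^2)"
proof -
  define a where "a = g 0"
  have a1: "norm a < 1" unfolding a_def by (rule g1) simp
  define M where "M = Moebius_function 0 a \<circ> g"
  have holM: "M holomorphic_on ball 0 1"
    unfolding M_def
    by (rule holomorphic_on_compose_gen[OF holg Moebius_function_holomorphic[OF a1]]) (use g1 in auto)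
  have M0: "M 0 = 0" by (simp add: M_def a_def Moebius_function_eq_zero)
  have M1: "norm (M z) < 1" if "norm z < 1" for z
    unfolding M_def o_def by (rule Moebius_function_norm_lt_1[OF a1 g1[OF that]])
  have le: "norm (M \<eta>) \<le> norm \<eta>" by (rule Schwarz_Lemma(1)[OF holM M0 M1 \<eta>])
  have den: "1 - cnj a * g \<eta> \<noteq> 0"
  proof
    assume "1 - cnj a * g \<eta> = 0"
    then have "cnj a * g \<eta> = 1" by simp
    then have "norm (cnj a * g \<eta>) = 1" by simp
    moreover have "norm (cnj a * g \<eta>) < 1"
    proof -
      have "norm a * norm (g \<eta>) \<le> norm a * 1"
        using g1[OF \<eta>] by (intro mult_left_mono) auto
      then show ?thesis using a1 by (simp add: norm_mult)
    qed
    ultimately show False by simp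
  qed
  have nle: "norm (g \<eta> - a) \<le> norm \<eta> * norm (1 - cnj a * g \<eta>)"
    using le den by (simp add: M_def Moebius_function_simple norm_divide divide_le_eq)
  then have "(norm (g \<eta> - a))^2 \<le> (norm \<eta>)^2 * (norm (1 - cnj a * g \<eta>))^2"
    using power_mono[OF nle norm_ge_zero, of 2] by (simp add: power_mult_distrib)
  moreover have "(norm (1 - cnj a * g \<eta>))^2 - (norm (g \<eta> - a))^2 = (1 - (norm a)^2) * (1 - (norm (g \<eta>))^2)"
  proof -
    obtain x y where g: "g \<eta> = Complex x y" by (metis complex.exhaust)
    obtain u v where a: "a = Complex u v" by (metis complex.exhaust)
    show ?thesis unfolding g a
      by (simp add: cmod_power2) (simp add: power2_eq_square algebra_simps)
  qed
  ultimately show ?thesis unfolding a_def[symmetric] by (simp add: algebra_simps)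
qed

lemma norm_one_plus_sq:
  fixes w :: complex and d :: real
  shows "(norm (1 + of_real d * w))^2 = 1 + 2 * d * Re w + d^2 * (norm w)^2"
proof -
  obtain x y where w: "w = Complex x y" by (metis complex.exhaust)
  show ?thesis unfolding w
    by (simp add: cmod_power2) (simp add: power2_eq_square algebra_simps)
qed

lemma julia:
  fixes g :: "complex \<Rightarrow> complex" and \<zeta>0 :: complex and t :: real
  assumes holg: "g holomorphic_on ball 0 1" and g1: "\<And>\<eta>. norm \<eta> < 1 \<Longrightarrow> norm (g \<eta>) < 1"
    and n0: "norm \<zeta>0 = 1" and fx: "g \<zeta>0 = \<zeta>0" and dg: "(g has_field_derivative of_real t) (at \<zeta>0)"
  shows "(norm (\<zeta>0 - g 0))^2 \<le> t * (1 - (norm (g 0))^2)"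
proof -
  define a where "a = g 0"
  have z0: "\<zeta>0 \<noteq> 0" using n0 by auto
  define qq where "qq s = (g (of_real s * \<zeta>0) - \<zeta>0) / (of_real (s - 1) * \<zeta>0)" for s :: real
  have lim1: "((\<lambda>s. of_real s * \<zeta>0) \<longlongrightarrow> \<zeta>0) (at_left (1::real))"
  proof -
    have "((\<lambda>s. of_real s * \<zeta>0) \<longlongrightarrow> of_real 1 * \<zeta>0) (at_left (1::real))"
      by (intro tendsto_intros)
    then show ?thesis by simp
  qed
  have ev01: "\<forall>\<^sub>F s in at_left (1::real). s \<in> {0<..<1}" by (rule eventually_at_left_real) simp
  have flim: "filterlim (\<lambda>s. of_real s * \<zeta>0) (at \<zeta>0) (at_left (1::real))"
  proof (subst filterlim_at, intro conjI lim1)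
    show "\<forall>\<^sub>F s in at_left 1. of_real s * \<zeta>0 \<in> UNIV \<and> of_real s * \<zeta>0 \<noteq> \<zeta>0"
      using ev01 by (rule eventually_mono) (use z0 in auto)
  qed
  have "((\<lambda>y. (g y - g \<zeta>0) / (y - \<zeta>0)) \<longlongrightarrow> of_real t) (at \<zeta>0)"
    using dg by (simp add: has_field_derivative_iff)
  from filterlim_compose[OF this flim]
  have "((\<lambda>s. (g (of_real s * \<zeta>0) - g \<zeta>0) / (of_real s * \<zeta>0 - \<zeta>0)) \<longlongrightarrow> of_real t) (at_left 1)" .
  moreover have "(g (of_real s * \<zeta>0) - g \<zeta>0) / (of_real s * \<zeta>0 - \<zeta>0) = qq s" for s
    by (simp add: qq_def fx algebra_simps)
  ultimately have qlim: "(qq \<longlongrightarrow> of_real t) (at_left 1)" by simp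
  have glim: "((\<lambda>s. g (of_real s * \<zeta>0)) \<longlongrightarrow> \<zeta>0) (at_left (1::real))"
  proof -
    have "isCont g \<zeta>0" using dg by (rule DERIV_isCont)
    from isCont_tendsto_compose[OF this lim1] show ?thesis by (simp add: fx)
  qed
  define L where "L s = (1 + s) * (norm (1 - cnj a * g (of_real s * \<zeta>0)))^2" for s :: real
  define Rr where "Rr s = (1 - (norm a)^2) * (2 * Re (qq s) - (1 - s) * (norm (qq s))^2)" for s :: real
  have Llim: "(L \<longlongrightarrow> (1 + 1) * (norm (1 - cnj a * \<zeta>0))^2) (at_left 1)"
    unfolding L_def by (intro tendsto_intros glim)
  have Rlim: "(Rr \<longlongrightarrow> (1 - (norm a)^2) * (2 * Re (of_real t) - (1 - 1) * (norm (of_real t :: complex))^2)) (at_left 1)"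
    unfolding Rr_def by (intro tendsto_intros qlim)
  have ev: "\<forall>\<^sub>F s in at_left 1. L s \<le> Rr s"
    using ev01
  proof (rule eventually_mono)
    fix s :: real assume s: "s \<in> {0<..<1}"
    have ns: "norm (of_real s * \<zeta>0) = s" using s n0 by (simp add: norm_mult)
    have SP: "(1 - s^2) * (norm (1 - cnj a * g (of_real s * \<zeta>0)))^2 \<le> (1 - (norm a)^2) * (1 - (norm (g (of_real s * \<zeta>0)))^2)"
      using schwarz_pick0[OF holg g1, of "of_real s * \<zeta>0"] ns s by (simp add: a_def)
    have gs: "g (of_real s * \<zeta>0) = \<zeta>0 * (1 + of_real (s - 1) * qq s)"
      using s z0 by (simp add: qq_def field_simps)
    have "(norm (g (of_real s * \<zeta>0)))^2 = 1 + 2 * (s - 1) * Re (qq s) + (s - 1)^2 * (norm (qq s))^2"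
      unfolding gs norm_mult n0 mult_1_left by (rule norm_one_plus_sq)
    then have X: "1 - (norm (g (of_real s * \<zeta>0)))^2 = (1 - s) * (2 * Re (qq s) - (1 - s) * (norm (qq s))^2)"
      by (simp add: power2_eq_square algebra_simps)
    have e1: "(1 - s) * ((1 + s) * (norm (1 - cnj a * g (of_real s * \<zeta>0)))^2) = (1 - s^2) * (norm (1 - cnj a * g (of_real s * \<zeta>0)))^2"
      by (simp add: power2_eq_square algebra_simps)
    have e2: "(1 - s) * Rr s = (1 - (norm a)^2) * (1 - (norm (g (of_real s * \<zeta>0)))^2)"
      unfolding X Rr_def by (simp add: algebra_simps)
    have "(1 - s) * ((1 + s) * (norm (1 - cnj a * g (of_real s * \<zeta>0)))^2) \<le> (1 - s) * Rr s"
      unfolding e1 e2 by (rule SP)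
    then show "L s \<le> Rr s" unfolding L_def using s by simp
  qed
  have "(1 + 1) * (norm (1 - cnj a * \<zeta>0))^2 \<le> (1 - (norm a)^2) * (2 * Re (of_real t) - (1 - 1) * (norm (of_real t :: complex))^2)"
    by (rule tendsto_le[OF trivial_limit_at_left_real Rlim Llim ev])
  moreover have "norm (1 - cnj a * \<zeta>0) = norm (\<zeta>0 - a)"
  proof -
    have "cnj \<zeta>0 * \<zeta>0 = 1" using n0 by (simp add: complex_norm_square[symmetric] mult.commute)
    then have "1 - cnj a * \<zeta>0 = \<zeta>0 * cnj (\<zeta>0 - a)" by (simp add: algebra_simps)
    then have "norm (1 - cnj a * \<zeta>0) = norm (cnj (\<zeta>0 - a))" using n0 by (simp only: norm_mult)
    then show ?thesis by (simp only: complex_mod_cnj)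
  qed
  ultimately show ?thesis by (simp add: a_def algebra_simps)
qed

lemma norm_mult_lt1:
  fixes a b :: complex
  assumes "norm a < 1" "norm b < 1" shows "norm (a * b) < 1"
proof -
  have "norm a * norm b \<le> 1 * norm b" using assms by (intro mult_right_mono) auto
  then show ?thesis using assms by (simp add: norm_mult)
qed

lemma hol_scale: 
  assumes "f holomorphic_on ball 0 1" "norm c \<le> 1"
  shows "(\<lambda>\<xi>. f (\<xi> * c)) holomorphic_on ball 0 1"
proof (rule holomorphic_on_compose_gen[unfolded o_def, of "\<lambda>\<xi>::complex. \<xi> * c" _ f "ball 0 1"])
  show "(\<lambda>\<xi>::complex. \<xi> * c) holomorphic_on ball 0 1" by (intro holomorphic_intros)
  show "f holomorphic_on ball 0 1" by (rule assms(1))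
  show "(\<lambda>\<xi>::complex. \<xi> * c) ` ball 0 1 \<subseteq> ball 0 1"
  proof clarify
    fix \<xi> :: complex assume "\<xi> \<in> ball 0 1"
    then have "norm \<xi> < 1" by simp
    moreover have "norm (\<xi> * c) \<le> norm \<xi>" using assms(2) by (simp add: norm_mult mult_left_le)
    ultimately show "\<xi> * c \<in> ball 0 1" by simp
  qed
qed

locale cvx =
  fixes \<phi> \<psi> :: "complex \<Rightarrow> complex"
  assumes K: "convK \<phi>"
    and \<psi>hol: "\<psi> holomorphic_on \<phi> ` ball 0 1"
    and \<psi>\<phi>: "\<And>z. z \<in> ball 0 1 \<Longrightarrow> \<psi> (\<phi> z) = z"
    and d\<phi>\<psi>: "\<And>z. z \<in> ball 0 1 \<Longrightarrow> deriv \<phi> z * deriv \<psi> (\<phi> z) = 1"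
begin

definition "D = \<phi> ` ball 0 1"

lemma hol\<phi>: "\<phi> holomorphic_on ball 0 1" and \<phi>0: "\<phi> 0 = 0" and d\<phi>0: "deriv \<phi> 0 = 1"
  and inj: "inj_on \<phi> (ball 0 1)" and cvxD: "convex D"
  using K by (auto simp: convK_def D_def)

lemma openD: "open D"
  unfolding D_def by (rule open_mapping_thm3[OF hol\<phi> open_ball inj])

lemma \<psi>D: "w \<in> D \<Longrightarrow> norm (\<psi> w) < 1"
  unfolding D_def using \<psi>\<phi> by auto

lemma \<psi>0: "\<psi> 0 = 0"
  using \<psi>\<phi>[of 0] \<phi>0 by simp

lemma d\<phi>: "norm z < 1 \<Longrightarrow> (\<phi> has_field_derivative deriv \<phi> z) (at z)"
  by (rule holomorphic_derivI[OF hol\<phi> open_ball]) simp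

lemma d\<phi>nz: "norm z < 1 \<Longrightarrow> deriv \<phi> z \<noteq> 0"
  by (rule holomorphic_injective_imp_regular[OF hol\<phi> open_ball inj]) simp

lemma d\<psi>: "norm z < 1 \<Longrightarrow> (\<psi> has_field_derivative inverse (deriv \<phi> z)) (at (\<phi> z))"
proof -
  assume z: "norm z < 1"
  have "(\<psi> has_field_derivative deriv \<psi> (\<phi> z)) (at (\<phi> z))"
    by (rule holomorphic_derivI[OF \<psi>hol[folded D_def] openD]) (use z in \<open>simp add: D_def\<close>)
  moreover have "deriv \<psi> (\<phi> z) = inverse (deriv \<phi> z)"
    using d\<phi>\<psi>[of z] d\<phi>nz[OF z] z by (simp add: field_simps)
  ultimately show ?thesis by simp
qed

lemma d\<phi>c: "norm (\<xi>0 * c) < 1 \<Longrightarrow> ((\<lambda>\<xi>. \<phi> (\<xi> * c)) has_field_derivative deriv \<phi> (\<xi>0 * c) * c) (at \<xi>0)"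
proof -
  assume a: "norm (\<xi>0 * c) < 1"
  have "((\<lambda>\<xi>. \<xi> * c) has_field_derivative c) (at \<xi>0)"
    by (auto intro!: derivative_eq_intros)
  from DERIV_chain2[OF d\<phi>[OF a] this] show ?thesis .
qed

lemma inD: "norm u < 1 \<Longrightarrow> norm v < 1 \<Longrightarrow> 0 \<le> t \<Longrightarrow> t \<le> 1 \<Longrightarrow> of_real t * \<phi> u + of_real (1 - t) * \<phi> v \<in> D"
  using convexD[OF cvxD, of "\<phi> u" "\<phi> v" t "1 - t"] by (simp add: D_def scaleR_conv_of_real)

lemma \<psi>hol': "\<psi> holomorphic_on D"
  using \<psi>hol by (simp add: D_def)

lemma S1:
  assumes z0: "norm z0 < 1" "z0 \<noteq> 0" and x: "norm x < 1" and t: "0 < t" "t \<le> 1"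
  shows "norm (\<psi> (of_real t * \<phi> (of_real (norm z0) * x) + of_real (1 - t) * \<phi> z0)) < norm z0"
proof -
  define r where "r = norm z0"
  have r: "0 < r" "r < 1" using z0 by (auto simp: r_def)
  define \<zeta>0 where "\<zeta>0 = z0 / of_real r"
  have n\<zeta>0: "norm \<zeta>0 = 1" using r by (simp add: \<zeta>0_def norm_divide r_def)
  have r\<zeta>0: "of_real r * \<zeta>0 = z0" using r by (simp add: \<zeta>0_def)
  define I where "I \<xi> = of_real t * \<phi> (\<xi> * x) + of_real (1 - t) * \<phi> (\<xi> * \<zeta>0)" for \<xi>
  define H where "H \<xi> = \<psi> (I \<xi>)" for \<xi>
  have ID: "I \<xi> \<in> D" if "norm \<xi> < 1" for \<xi>
  proof -
    have "norm (\<xi> * x) < 1"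
      using that x by (rule norm_mult_lt1)
    moreover have "norm (\<xi> * \<zeta>0) < 1" using that n\<zeta>0 by (simp add: norm_mult)
    ultimately show ?thesis unfolding I_def using inD t by simp
  qed
  have holI: "I holomorphic_on ball 0 1"
    unfolding I_def
    by (intro holomorphic_intros hol_scale[OF hol\<phi>]) (use x n\<zeta>0 in auto)
  have holH: "H holomorphic_on ball 0 1"
    unfolding H_def
    by (rule holomorphic_on_compose_gen[unfolded o_def, OF holI \<psi>hol']) (use ID in auto)
  have I0: "I 0 = 0" by (simp add: I_def \<phi>0)
  have H0: "H 0 = 0" by (simp add: H_def I0 \<psi>0)
  have H1: "norm (H \<xi>) < 1" if "norm \<xi> < 1" for \<xi>
    unfolding H_def by (rule \<psi>D[OF ID[OF that]])
  have dI: "(I has_field_derivative (of_real t * x + of_real (1 - t) * \<zeta>0)) (at 0)"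
  proof -
    have a: "((\<lambda>\<xi>. \<phi> (\<xi> * x)) has_field_derivative deriv \<phi> 0 * x) (at 0)"
      using d\<phi>c[of 0 x] by simp
    have b: "((\<lambda>\<xi>. \<phi> (\<xi> * \<zeta>0)) has_field_derivative deriv \<phi> 0 * \<zeta>0) (at 0)"
      using d\<phi>c[of 0 \<zeta>0] by simp
    have "(I has_field_derivative (of_real t * (deriv \<phi> 0 * x) + of_real (1 - t) * (deriv \<phi> 0 * \<zeta>0))) (at 0)"
      unfolding I_def
      by (rule DERIV_add[OF DERIV_cmult[OF a] DERIV_cmult[OF b]])
    then show ?thesis by (simp add: d\<phi>0)
  qed
  have dH: "(H has_field_derivative (of_real t * x + of_real (1 - t) * \<zeta>0)) (at 0)"
  proof -
    have "(\<psi> has_field_derivative inverse (deriv \<phi> 0)) (at (\<phi> 0))" by (rule d\<psi>) simp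
    then have "(\<psi> has_field_derivative 1) (at (I 0))" by (simp add: d\<phi>0 \<phi>0 I0)
    from DERIV_chain2[OF this dI] show ?thesis unfolding H_def[abs_def] by simp
  qed
  have nr: "norm (of_real r :: complex) < 1" using r by (simp add: abs_of_pos)
  have le: "norm (H (of_real r)) \<le> norm (of_real r :: complex)"
    by (rule Schwarz_Lemma(1)[OF holH H0 H1 nr])
  have neq: "norm (H (of_real r)) \<noteq> r"
  proof
    assume eq: "norm (H (of_real r)) = r"
    have "\<exists>\<alpha>. (\<forall>z. norm z < 1 \<longrightarrow> H z = \<alpha> * z) \<and> norm \<alpha> = 1"
      by (rule Schwarz_Lemma(3)[OF holH H0 H1, of 0]) (use eq r in \<open>auto intro!: exI[of _ "of_real r"]\<close>)
    then obtain \<alpha> where \<alpha>: "\<And>z. norm z < 1 \<Longrightarrow> H z = \<alpha> * z" "norm \<alpha> = 1" by blast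
    have "deriv H 0 = deriv (\<lambda>z. \<alpha> * z) 0"
    proof (rule deriv_cong_ev)
      have "\<forall>\<^sub>F z in nhds 0. z \<in> ball (0::complex) 1" by (rule eventually_nhds_in_open) auto
      then show "\<forall>\<^sub>F z in nhds 0. H z = \<alpha> * z" by (rule eventually_mono) (simp add: \<alpha>)
    qed simp
    then have "of_real t * x + of_real (1 - t) * \<zeta>0 = \<alpha>"
      using DERIV_imp_deriv[OF dH] by simp
    then have "norm (of_real t * x + of_real (1 - t) * \<zeta>0) = 1" using \<alpha>(2) by simp
    moreover have "norm (of_real t * x + of_real (1 - t) * \<zeta>0) < 1"
    proof -
      have "1 - complex_of_real t = of_real (1 - t)" by simp
      then have n1t: "norm (1 - complex_of_real t) = 1 - t" using t by (simp only: norm_of_real)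
      have "norm (of_real t * x + of_real (1 - t) * \<zeta>0) \<le> t * norm x + (1 - t)"
        using norm_triangle_ineq[of "of_real t * x" "of_real (1 - t) * \<zeta>0"] t n\<zeta>0
        by (simp add: norm_mult n1t)
      also have "\<dots> < t * 1 + (1 - t)" using t x by simp
      finally show ?thesis by simp
    qed
    ultimately show False by simp
  qed
  have "H (of_real r) = \<psi> (of_real t * \<phi> (of_real r * x) + of_real (1 - t) * \<phi> z0)"
    by (simp add: H_def I_def r\<zeta>0)
  then show ?thesis using le neq r by (simp add: r_def[symmetric])
qed

end

lemma norm_diff_sq: "(norm (a - b :: complex))^2 = (norm a)^2 - 2 * Re (cnj a * b) + (norm b)^2"
proof -
  obtain x y where a: "a = Complex x y" by (metis complex.exhaust)
  obtain u v where b: "b = Complex u v" by (metis complex.exhaust)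
  show ?thesis unfolding a b by (simp add: cmod_power2) (simp add: power2_eq_square algebra_simps)
qed

context cvx begin

lemma MS_ineq:
  assumes z0: "norm z0 < 1" "z0 \<noteq> 0" and u: "0 < u" "u < 1"
  shows "(norm z0)^2 \<le> 2 * Re (cnj z0 * (\<psi> (of_real u * \<phi> z0) / of_real u))"
proof -
  define r where "r = norm z0"
  have r01: "0 < r" "r < 1" using z0 by (auto simp: r_def)
  define \<zeta>0 where "\<zeta>0 = z0 / of_real r"
  have n\<zeta>0: "norm \<zeta>0 = 1" using r01 by (simp add: \<zeta>0_def norm_divide r_def)
  have rnz: "complex_of_real r \<noteq> 0" using r01 by simp
  have r\<zeta>0: "of_real r * \<zeta>0 = z0" using r01 by (simp add: \<zeta>0_def)
  define J where "J \<eta> = of_real (1 - u) * \<phi> (of_real r * \<eta>) + of_real (1 - (1 - u)) * \<phi> z0" for \<eta>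
  define G where "G \<eta> = \<psi> (J \<eta>) / of_real r" for \<eta>
  have nr\<eta>: "norm (of_real r * \<eta>) < 1" if "norm \<eta> < 1" for \<eta> :: complex
    using norm_mult_lt1[of "of_real r" \<eta>] r01 that by (simp add: abs_of_pos)
  have JD: "J \<eta> \<in> D" if "norm \<eta> < 1" for \<eta>
    unfolding J_def by (rule inD[OF nr\<eta>[OF that] z0(1)]) (use u in auto)
  have holJ: "J holomorphic_on ball 0 1"
  proof -
    have "(\<lambda>\<eta>. \<phi> (\<eta> * of_real r)) holomorphic_on ball 0 1"
      by (rule hol_scale[OF hol\<phi>]) (use r01 in simp)
    then have "(\<lambda>\<eta>. \<phi> (of_real r * \<eta>)) holomorphic_on ball 0 1" by (simp add: mult.commute)
    then show ?thesis unfolding J_def by (intro holomorphic_intros)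
  qed
  have holG: "G holomorphic_on ball 0 1"
  proof -
    have "(\<lambda>\<eta>. \<psi> (J \<eta>)) holomorphic_on ball 0 1"
      by (rule holomorphic_on_compose_gen[unfolded o_def, OF holJ \<psi>hol']) (use JD in auto)
    then show ?thesis unfolding G_def by (intro holomorphic_intros) (simp_all add: rnz)
  qed
  have G1: "norm (G \<eta>) < 1" if "norm \<eta> < 1" for \<eta>
  proof -
    have "norm (\<psi> (J \<eta>)) < r"
      using S1[OF z0 that, of "1 - u"] u by (simp add: J_def r_def)
    then show ?thesis using r01 by (simp add: G_def norm_divide)
  qed
  have J\<zeta>0: "J \<zeta>0 = \<phi> z0" by (simp add: J_def r\<zeta>0) (simp add: algebra_simps)
  have fx: "G \<zeta>0 = \<zeta>0"
  proof -
    have "G \<zeta>0 = z0 / of_real r" using \<psi>\<phi>[of z0] z0 by (simp add: G_def J\<zeta>0)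
    then show ?thesis by (simp add: \<zeta>0_def)
  qed
  have dG: "(G has_field_derivative of_real (1 - u)) (at \<zeta>0)"
  proof -
    have d1: "((\<lambda>\<eta>. \<phi> (\<eta> * of_real r)) has_field_derivative deriv \<phi> z0 * of_real r) (at \<zeta>0)"
      using d\<phi>c[of \<zeta>0 "of_real r"] r\<zeta>0 z0 by (simp add: mult.commute)
    have dJ: "(J has_field_derivative of_real (1 - u) * (deriv \<phi> z0 * of_real r)) (at \<zeta>0)"
    proof -
      have "((\<lambda>\<eta>. of_real (1 - u) * \<phi> (\<eta> * of_real r) + of_real (1 - (1 - u)) * \<phi> z0) has_field_derivative of_real (1 - u) * (deriv \<phi> z0 * of_real r) + 0) (at \<zeta>0)"
        by (rule DERIV_add[OF DERIV_cmult[OF d1] DERIV_const])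
      then show ?thesis by (simp add: J_def[abs_def] mult.commute)
    qed
    have "(\<psi> has_field_derivative inverse (deriv \<phi> z0)) (at (J \<zeta>0))"
      unfolding J\<zeta>0 by (rule d\<psi>[OF z0(1)])
    from DERIV_chain2[OF this dJ]
    have "((\<lambda>\<eta>. \<psi> (J \<eta>)) has_field_derivative inverse (deriv \<phi> z0) * (of_real (1 - u) * (deriv \<phi> z0 * of_real r))) (at \<zeta>0)" .
    from DERIV_cdivide[OF this, of "of_real r"]
    have "(G has_field_derivative inverse (deriv \<phi> z0) * (of_real (1 - u) * (deriv \<phi> z0 * of_real r)) / of_real r) (at \<zeta>0)"
      unfolding G_def[abs_def] .
    moreover have "inverse (deriv \<phi> z0) * (of_real (1 - u) * (deriv \<phi> z0 * of_real r)) / of_real r = of_real (1 - u)"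
      using d\<phi>nz[OF z0(1)] r01 by (simp add: field_simps)
    ultimately show ?thesis by simp
  qed
  have jul: "(norm (\<zeta>0 - G 0))^2 \<le> (1 - u) * (1 - (norm (G 0))^2)"
    by (rule julia[OF holG G1 n\<zeta>0 fx dG])
  define b where "b = \<psi> (of_real u * \<phi> z0)"
  have G0: "G 0 = b / of_real r" by (simp add: G_def J_def b_def \<phi>0)
  have e1: "\<zeta>0 - G 0 = (z0 - b) / of_real r" by (simp add: G0 \<zeta>0_def diff_divide_distrib)
  have "(norm (z0 - b))^2 \<le> (1 - u) * (r^2 - (norm b)^2)"
  proof -
    have "(norm (z0 - b))^2 = r^2 * (norm (\<zeta>0 - G 0))^2"
      using r01 by (simp add: e1 norm_divide power_divide)
    also have "\<dots> \<le> r^2 * ((1 - u) * (1 - (norm (G 0))^2))"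
      by (rule mult_left_mono[OF jul]) simp
    also have "\<dots> = (1 - u) * (r^2 - (norm b)^2)"
      using r01 by (simp add: G0 norm_divide power_divide field_simps)
    finally show ?thesis .
  qed
  then have "r^2 - 2 * Re (cnj z0 * b) + (norm b)^2 \<le> (1 - u) * (r^2 - (norm b)^2)"
    by (simp add: norm_diff_sq r_def)
  then have "u * r^2 \<le> 2 * Re (cnj z0 * b) - (2 - u) * (norm b)^2"
    by (simp add: algebra_simps)
  moreover have "0 \<le> (2 - u) * (norm b)^2" using u by simp
  ultimately have "u * r^2 \<le> 2 * Re (cnj z0 * b)" by linarith
  then have "r^2 \<le> 2 * Re (cnj z0 * b) / u" using u by (simp add: field_simps)
  moreover have "Re (cnj z0 * (b / of_real u)) = Re (cnj z0 * b) / u"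
  proof -
    have "cnj z0 * (b / of_real u) = (cnj z0 * b) / of_real u" by simp
    then show ?thesis by (simp only: Re_divide_of_real)
  qed
  ultimately show ?thesis by (simp add: r_def b_def)
qed

end

lemma half_aux: "0 < n \<Longrightarrow> n \<le> 2 * A \<Longrightarrow> 1/2 \<le> A / (n::real)"
  by (simp add: field_simps)

context cvx begin

lemma MS:
  assumes z0: "norm z0 < 1" "z0 \<noteq> 0"
  shows "1/2 \<le> Re (\<phi> z0 / z0)"
proof -
  have \<phi>z0: "\<phi> z0 \<noteq> 0"
  proof
    assume "\<phi> z0 = 0"
    then have "\<phi> z0 = \<phi> 0" by (simp add: \<phi>0)
    then have "z0 = 0" using inj z0 by (auto dest: inj_onD)
    with z0 show False by simp
  qed
  have d\<psi>0: "(\<psi> has_field_derivative 1) (at 0)"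
    using d\<psi>[of 0] by (simp add: \<phi>0 d\<phi>0)
  then have "((\<lambda>y. (\<psi> y - \<psi> 0) / (y - 0)) \<longlongrightarrow> 1) (at 0)"
    by (simp add: has_field_derivative_iff)
  then have lim\<psi>: "((\<lambda>y. \<psi> y / y) \<longlongrightarrow> 1) (at 0)" by (simp add: \<psi>0)
  have ev01: "\<forall>\<^sub>F u in at_right (0::real). u \<in> {0<..<1}" by (rule eventually_at_right_real) simp
  have flim: "filterlim (\<lambda>u. of_real u * \<phi> z0) (at 0) (at_right (0::real))"
  proof (subst filterlim_at, intro conjI)
    show "\<forall>\<^sub>F u in at_right 0. of_real u * \<phi> z0 \<in> UNIV \<and> of_real u * \<phi> z0 \<noteq> 0"
      using ev01 by (rule eventually_mono) (use \<phi>z0 in auto)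
    have "((\<lambda>u. of_real u * \<phi> z0) \<longlongrightarrow> of_real 0 * \<phi> z0) (at_right (0::real))"
      by (intro tendsto_intros)
    then show "((\<lambda>u. of_real u * \<phi> z0) \<longlongrightarrow> 0) (at_right (0::real))" by simp
  qed
  from filterlim_compose[OF lim\<psi> flim]
  have "((\<lambda>u. \<psi> (of_real u * \<phi> z0) / (of_real u * \<phi> z0)) \<longlongrightarrow> 1) (at_right 0)" .
  then have "((\<lambda>u. \<psi> (of_real u * \<phi> z0) / (of_real u * \<phi> z0) * \<phi> z0) \<longlongrightarrow> 1 * \<phi> z0) (at_right 0)"
    by (intro tendsto_intros)
  moreover have "\<forall>\<^sub>F u in at_right 0. \<psi> (of_real u * \<phi> z0) / (of_real u * \<phi> z0) * \<phi> z0 = \<psi> (of_real u * \<phi> z0) / of_real u"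
    using ev01 by (rule eventually_mono) (use \<phi>z0 in auto)
  ultimately have "((\<lambda>u. \<psi> (of_real u * \<phi> z0) / of_real u) \<longlongrightarrow> \<phi> z0) (at_right 0)"
    by (simp add: tendsto_cong)
  then have L: "((\<lambda>u. 2 * Re (cnj z0 * (\<psi> (of_real u * \<phi> z0) / of_real u))) \<longlongrightarrow> 2 * Re (cnj z0 * \<phi> z0)) (at_right 0)"
    by (intro tendsto_intros)
  have ev: "\<forall>\<^sub>F u in at_right 0. (norm z0)^2 \<le> 2 * Re (cnj z0 * (\<psi> (of_real u * \<phi> z0) / of_real u))"
    using ev01 by (rule eventually_mono) (use MS_ineq[OF z0] in auto)
  have le: "(norm z0)^2 \<le> 2 * Re (cnj z0 * \<phi> z0)"
    by (rule tendsto_le[OF trivial_limit_at_right_real L tendsto_const ev])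
  have "\<phi> z0 / z0 = (cnj z0 * \<phi> z0) / of_real ((norm z0)^2)"
  proof -
    have nsq: "(complex_of_real (cmod z0))^2 = z0 * cnj z0" using complex_norm_square[of z0] by simp
    show ?thesis using z0 by (simp add: nsq field_simps)
  qed
  then have "Re (\<phi> z0 / z0) = Re (cnj z0 * \<phi> z0) / (norm z0)^2"
    by (simp only: Re_divide_of_real)
  moreover have "0 < (norm z0)^2" using z0 by simp
  ultimately show ?thesis using le half_aux by simp
qed

end

lemma marx_strohhacker:
  assumes K: "convK \<phi>" and z: "norm z < 1" "z \<noteq> 0"
  shows "1/2 \<le> Re (\<phi> z / z)"
proof -
  have hol: "\<phi> holomorphic_on ball 0 1" and inj: "inj_on \<phi> (ball 0 1)"
    using K by (auto simp: convK_def)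
  obtain \<psi> where "\<psi> holomorphic_on \<phi> ` ball 0 1" "\<And>z. z \<in> ball 0 1 \<Longrightarrow> deriv \<phi> z * deriv \<psi> (\<phi> z) = 1"
      "\<And>z. z \<in> ball 0 1 \<Longrightarrow> \<psi> (\<phi> z) = z"
    using holomorphic_has_inverse[OF hol open_ball inj] by blast
  then interpret cvx \<phi> \<psi> using K by unfold_locales auto
  show ?thesis by (rule MS[OF z])
qed

definition cf :: "(complex \<Rightarrow> complex) \<Rightarrow> complex fps" where
  "cf g = Abs_fps (tcoeff g)"

lemma cf_nth [simp]: "fps_nth (cf g) n = tcoeff g n"
  by (simp add: cf_def)

lemma cf_sums:
  assumes "g holomorphic_on ball 0 1" "norm w < 1"
  shows "(\<lambda>n. fps_nth (cf g) n * w ^ n) sums g w"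
  using holomorphic_power_series[OF assms(1), of w] assms(2) by (simp add: tcoeff_def)

lemma rad_cf:
  assumes "g holomorphic_on ball 0 1"
  shows "1 \<le> fps_conv_radius (cf g)"
  unfolding fps_conv_radius_def
proof (rule conv_radius_geI_ex')
  fix r :: real assume r: "0 < r" "ereal r < 1"
  have "norm (of_real r :: complex) < 1" using r by simp
  from sums_summable[OF cf_sums[OF assms this]]
  show "summable (\<lambda>n. fps_nth (cf g) n * of_real r ^ n)" .
qed

lemma eval_cf:
  assumes "g holomorphic_on ball 0 1" "norm w < 1"
  shows "eval_fps (cf g) w = g w"
  unfolding eval_fps_def using sums_unique[OF cf_sums[OF assms]] by simp

lemma ev_cf:
  assumes "g holomorphic_on ball 0 1" "norm z < 1"
  shows "\<forall>\<^sub>F w in nhds z. g w = eval_fps (cf g) w"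
proof -
  have "\<forall>\<^sub>F w in nhds z. w \<in> ball (0::complex) 1" by (rule eventually_nhds_in_open) (use assms in auto)
  then show ?thesis by (rule eventually_mono) (simp add: eval_cf[OF assms(1)])
qed

lemma hadamard_eval: "hadamard g h = eval_fps (had (cf g) (cf h))"
  by (rule ext) (simp add: hadamard_def eval_fps_def)

lemma rad_deriv1: "1 \<le> fps_conv_radius (A :: complex fps) \<Longrightarrow> 1 \<le> fps_conv_radius (fps_deriv A)"
  using fps_conv_radius_deriv[of A] by (rule order_trans[rotated])

lemma rad_Dk: "1 \<le> fps_conv_radius (A :: complex fps) \<Longrightarrow> 1 \<le> fps_conv_radius ((fps_deriv ^^ k) A)"
  by (induction k) (simp_all add: rad_deriv1)

lemma rad_mult: "1 \<le> fps_conv_radius A \<Longrightarrow> 1 \<le> fps_conv_radius B \<Longrightarrow> 1 \<le> fps_conv_radius (A * B :: complex fps)"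
  using fps_conv_radius_mult[of A B] by (simp add: min_def split: if_splits)

lemma rad_add: "1 \<le> fps_conv_radius A \<Longrightarrow> 1 \<le> fps_conv_radius B \<Longrightarrow> 1 \<le> fps_conv_radius (A + B :: complex fps)"
  using fps_conv_radius_add[of A B] by (simp add: min_def split: if_splits)

lemma rad_diff: "1 \<le> fps_conv_radius A \<Longrightarrow> 1 \<le> fps_conv_radius B \<Longrightarrow> 1 \<le> fps_conv_radius (A - B :: complex fps)"
  using fps_conv_radius_diff[of A B] by (simp add: min_def split: if_splits)

lemma rad_const: "1 \<le> fps_conv_radius (fps_const (c::complex))" by simp
lemma rad_X: "1 \<le> fps_conv_radius (fps_X :: complex fps)" by simp
lemma rad_X2: "1 \<le> fps_conv_radius (fps_X ^ 2 :: complex fps)" by simp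

lemma hderiv_eval:
  fixes A :: "complex fps" and z :: complex
  assumes "1 \<le> fps_conv_radius A" "norm z < 1"
  shows "(deriv ^^ k) (eval_fps A) z = eval_fps ((fps_deriv ^^ k) A) z"
  using assms(2)
proof (induction k arbitrary: z)
  case 0 then show ?case by simp
next
  case (Suc k)
  have "(deriv ^^ Suc k) (eval_fps A) z = deriv ((deriv ^^ k) (eval_fps A)) z" by simp
  also have "\<dots> = deriv (eval_fps ((fps_deriv ^^ k) A)) z"
  proof (rule deriv_cong_ev)
    have "\<forall>\<^sub>F w in nhds z. w \<in> ball (0::complex) 1" by (rule eventually_nhds_in_open) (use Suc.prems in auto)
    then show "\<forall>\<^sub>F w in nhds z. (deriv ^^ k) (eval_fps A) w = eval_fps ((fps_deriv ^^ k) A) w"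
      by (rule eventually_mono) (simp add: Suc.IH)
  qed simp
  also have "\<dots> = eval_fps (fps_deriv ((fps_deriv ^^ k) A)) z"
    by (rule eval_fps_deriv[symmetric]) (rule norm_lt_radius[OF rad_Dk[OF assms(1)] Suc.prems])
  finally show ?case by simp
qed

lemma hderiv_fun:
  assumes "g holomorphic_on ball 0 1" "norm z < 1"
  shows "(deriv ^^ k) g z = eval_fps ((fps_deriv ^^ k) (cf g)) z"
proof -
  have "(deriv ^^ k) g z = (deriv ^^ k) (eval_fps (cf g)) z"
    by (rule higher_deriv_cong_ev[OF ev_cf[OF assms] refl])
  also have "\<dots> = eval_fps ((fps_deriv ^^ k) (cf g)) z"
    by (rule hderiv_eval[OF rad_cf[OF assms(1)] assms(2)])
  finally show ?thesis .
qed

definition LF :: "real \<Rightarrow> real \<Rightarrow> complex fps \<Rightarrow> complex fps" where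
  "LF \<gamma> \<delta> A = fps_const (of_real \<gamma>) * fps_deriv A
     + fps_const (of_real \<delta>) * (fps_X * fps_deriv (fps_deriv A))
     + fps_const (of_real ((\<delta> - \<gamma>) / 2)) * (fps_X ^ 2 * fps_deriv (fps_deriv (fps_deriv A)))"

lemma rad_LF: "1 \<le> fps_conv_radius A \<Longrightarrow> 1 \<le> fps_conv_radius (LF \<gamma> \<delta> A)"
  unfolding LF_def
  by (intro rad_add rad_mult rad_const rad_X rad_X2 rad_deriv1)

lemma Lop_eval:
  assumes rA: "1 \<le> fps_conv_radius A" and z: "norm z < 1"
    and dk: "\<And>k. (deriv ^^ k) g z = eval_fps ((fps_deriv ^^ k) A) z"
  shows "Lop \<gamma> \<delta> g z = eval_fps (LF \<gamma> \<delta> A) z"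
proof -
  have r: "\<And>B. 1 \<le> fps_conv_radius B \<Longrightarrow> norm z < fps_conv_radius B"
    using norm_lt_radius z by blast
  have d1: "deriv g z = eval_fps (fps_deriv A) z" using dk[of 1] by simp
  have d2: "(deriv ^^ 2) g z = eval_fps (fps_deriv (fps_deriv A)) z" using dk[of 2] by (simp add: numeral_2_eq_2)
  have d3: "(deriv ^^ 3) g z = eval_fps (fps_deriv (fps_deriv (fps_deriv A))) z" using dk[of 3] by (simp add: numeral_3_eq_3)
  have R1: "1 \<le> fps_conv_radius (fps_deriv A)" by (rule rad_deriv1[OF rA])
  have R2: "1 \<le> fps_conv_radius (fps_deriv (fps_deriv A))" by (rule rad_deriv1[OF R1])
  have R3: "1 \<le> fps_conv_radius (fps_deriv (fps_deriv (fps_deriv A)))" by (rule rad_deriv1[OF R2])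
  show ?thesis
    unfolding LF_def Lop_def d1 d2 d3
    by (simp add: eval_fps_add eval_fps_mult r rad_add rad_mult rad_const rad_X rad_X2 R1 R2 R3 mult_ac)
qed

definition KK :: "real \<Rightarrow> real \<Rightarrow> nat \<Rightarrow> complex" where
  "KK \<gamma> \<delta> n = of_nat (n + 1) * (of_real \<gamma> + of_real \<delta> * of_nat n + of_real ((\<delta> - \<gamma>) / 2) * of_nat n * (of_nat n - 1))"

lemma LF_nth: "fps_nth (LF \<gamma> \<delta> A) n = fps_nth A (n + 1) * KK \<gamma> \<delta> n"
proof (cases n)
  case 0 then show ?thesis by (simp add: LF_def KK_def fps_X_power_mult_nth)
next
  case (Suc m)
  then show ?thesis
  proof (cases m)
    case 0 with Suc show ?thesis by (simp add: LF_def KK_def fps_X_power_mult_nth) (simp add: algebra_simps)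
  next
    case (Suc k) with \<open>n = Suc m\<close> show ?thesis
      by (simp add: LF_def KK_def fps_X_power_mult_nth) (simp add: algebra_simps)
  qed
qed

lemma LF_had: "LF \<gamma> \<delta> (had A C) = had (LF \<gamma> \<delta> A) (fps_shift 1 C)"
  by (rule fps_ext) (simp add: LF_nth)

lemma had_add: "had (A + B) P = had A P + had B P"
  by (rule fps_ext) (simp add: algebra_simps)
lemma had_diff: "had (A - B) P = had A P - had B P"
  by (rule fps_ext) (simp add: algebra_simps)
lemma had_cmult: "had (fps_const c * A) P = fps_const c * had A P"
  by (rule fps_ext) simp
lemma had_const: "fps_nth P 0 = 1 \<Longrightarrow> had (fps_const c) P = fps_const c"
  by (rule fps_ext) simp

lemma tcoeff0: "tcoeff g 0 = g 0" by (simp add: tcoeff_def)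
lemma tcoeff1: "tcoeff g 1 = deriv g 0" by (simp add: tcoeff_def)
lemma tcoeff1': "tcoeff g (Suc 0) = deriv g 0" by (simp add: tcoeff_def)

lemma P_props:
  assumes K: "convK \<phi>"
  shows "1 \<le> fps_conv_radius (fps_shift 1 (cf \<phi>))" "fps_nth (fps_shift 1 (cf \<phi>)) 0 = 1"
    "\<And>w. norm w < 1 \<Longrightarrow> 1/2 \<le> Re (eval_fps (fps_shift 1 (cf \<phi>)) w)"
proof -
  have hol: "\<phi> holomorphic_on ball 0 1" and \<phi>0: "\<phi> 0 = 0" and d0: "deriv \<phi> 0 = 1"
    using K by (auto simp: convK_def)
  have rC: "1 \<le> fps_conv_radius (cf \<phi>)" by (rule rad_cf[OF hol])
  show "1 \<le> fps_conv_radius (fps_shift 1 (cf \<phi>))" using rC by simp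
  show P0: "fps_nth (fps_shift 1 (cf \<phi>)) 0 = 1" by (simp add: tcoeff1 tcoeff1' d0)
  fix w :: complex assume w: "norm w < 1"
  show "1/2 \<le> Re (eval_fps (fps_shift 1 (cf \<phi>)) w)"
  proof (cases "w = 0")
    case True then show ?thesis by (simp add: eval_fps_at_0 tcoeff1' d0)
  next
    case False
    have nz: "cf \<phi> \<noteq> 0"
    proof
      assume "cf \<phi> = 0"
      then have "fps_nth (cf \<phi>) 1 = 0" by simp
      then show False by (simp add: tcoeff1 tcoeff1' d0)
    qed
    have sd: "1 \<le> subdegree (cf \<phi>)"
      by (rule subdegree_geI[OF nz]) (simp add: tcoeff0 \<phi>0)
    have "eval_fps (fps_shift 1 (cf \<phi>)) w = eval_fps (cf \<phi>) w / w ^ 1"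
      using eval_fps_shift[OF sd norm_lt_radius[OF rC w]] False by simp
    also have "\<dots> = \<phi> w / w" by (simp add: eval_cf[OF hol w])
    finally show ?thesis using marx_strohhacker[OF K w False] by simp
  qed
qed

lemma Lop_fun:
  assumes "g holomorphic_on ball 0 1" "norm z < 1"
  shows "Lop \<gamma> \<delta> g z = eval_fps (LF \<gamma> \<delta> (cf g)) z"
  by (rule Lop_eval[OF rad_cf[OF assms(1)] assms(2) hderiv_fun[OF assms]])

lemma Lop_had:
  assumes "1 \<le> fps_conv_radius F" "norm z < 1"
  shows "Lop \<gamma> \<delta> (eval_fps F) z = eval_fps (LF \<gamma> \<delta> F) z"
  by (rule Lop_eval[OF assms hderiv_eval[OF assms]])

lemma classH0_had:
  assumes hg: "g holomorphic_on ball 0 1" and K: "convK \<phi>"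
  shows "hadamard g \<phi> holomorphic_on ball 0 1" "hadamard g \<phi> 0 = g 0 * \<phi> 0"
    "deriv (hadamard g \<phi>) 0 = deriv g 0 * deriv \<phi> 0"
proof -
  have h\<phi>: "\<phi> holomorphic_on ball 0 1" using K by (simp add: convK_def)
  have r: "1 \<le> fps_conv_radius (had (cf g) (cf \<phi>))" by (rule radius_had[OF rad_cf[OF hg] rad_cf[OF h\<phi>]])
  show "hadamard g \<phi> holomorphic_on ball 0 1" unfolding hadamard_eval by (rule hol_eval_fps_ball[OF r])
  show "hadamard g \<phi> 0 = g 0 * \<phi> 0" unfolding hadamard_eval by (simp add: eval_fps_at_0 tcoeff0)
  have "deriv (eval_fps (had (cf g) (cf \<phi>))) 0 = eval_fps (fps_deriv (had (cf g) (cf \<phi>))) 0"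
    by (rule eval_fps_deriv[symmetric]) (rule norm_lt_radius[OF r], simp)
  then show "deriv (hadamard g \<phi>) 0 = deriv g 0 * deriv \<phi> 0"
    unfolding hadamard_eval by (simp add: eval_fps_at_0 tcoeff1')
qed

theorem corollary18:
  fixes \<gamma> \<delta> lam :: real and s t \<phi> :: "complex \<Rightarrow> complex"
  assumes "0 \<le> lam" "lam < \<gamma>" "\<gamma> \<le> \<delta>"
    and "RH0 \<gamma> \<delta> lam s t"
    and "convK \<phi>"
  shows "RH0 \<gamma> \<delta> lam (hadamard s \<phi>) (hadamard t \<phi>)"
proof -
  note K = assms(5)
  from assms(4) have H0: "classH0 s t"
    and ineq: "\<And>z. z \<in> ball 0 1 \<Longrightarrow> Re (Lop \<gamma> \<delta> s z - of_real lam) > norm (Lop \<gamma> \<delta> t z)"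
    unfolding RH0_def by auto
  from H0 have hs: "s holomorphic_on ball 0 1" and ht: "t holomorphic_on ball 0 1"
    and s0: "s 0 = 0" and ds0: "deriv s 0 = 1" and t0: "t 0 = 0" and dt0: "deriv t 0 = 0"
    unfolding classH0_def by auto
  from K have h\<phi>: "\<phi> holomorphic_on ball 0 1" and \<phi>0: "\<phi> 0 = 0" and d\<phi>0: "deriv \<phi> 0 = 1"
    unfolding convK_def by auto
  define A where "A = cf s"
  define B where "B = cf t"
  define C where "C = cf \<phi>"
  define P where "P = fps_shift 1 C"
  have rA: "1 \<le> fps_conv_radius A" unfolding A_def by (rule rad_cf[OF hs])
  have rB: "1 \<le> fps_conv_radius B" unfolding B_def by (rule rad_cf[OF ht])
  have rC: "1 \<le> fps_conv_radius C" unfolding C_def by (rule rad_cf[OF h\<phi>])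
  have rP: "1 \<le> fps_conv_radius P" and P0: "fps_nth P 0 = 1"
    and PRe: "\<And>w. norm w < 1 \<Longrightarrow> 1/2 \<le> Re (eval_fps P w)"
    using P_props[OF K] unfolding P_def C_def by auto
  have classH: "classH0 (hadamard s \<phi>) (hadamard t \<phi>)"
    unfolding classH0_def using classH0_had[OF hs K] classH0_had[OF ht K] s0 ds0 t0 dt0 \<phi>0 d\<phi>0 by simp
  define LS where "LS = LF \<gamma> \<delta> A"
  define LT where "LT = LF \<gamma> \<delta> B"
  have rLS: "1 \<le> fps_conv_radius LS" unfolding LS_def by (rule rad_LF[OF rA])
  have rLT: "1 \<le> fps_conv_radius LT" unfolding LT_def by (rule rad_LF[OF rB])
  have LopS: "Lop \<gamma> \<delta> s w = eval_fps LS w" if "norm w < 1" for w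
    unfolding LS_def A_def by (rule Lop_fun[OF hs that])
  have LopT: "Lop \<gamma> \<delta> t w = eval_fps LT w" if "norm w < 1" for w
    unfolding LT_def B_def by (rule Lop_fun[OF ht that])
  have LopHS: "Lop \<gamma> \<delta> (hadamard s \<phi>) z = eval_fps (had LS P) z" if "norm z < 1" for z
  proof -
    have "Lop \<gamma> \<delta> (hadamard s \<phi>) z = eval_fps (LF \<gamma> \<delta> (had A C)) z"
      unfolding hadamard_eval A_def C_def
      by (rule Lop_had[OF radius_had[OF rad_cf[OF hs] rad_cf[OF h\<phi>]] that])
    then show ?thesis by (simp add: LF_had LS_def P_def)
  qed
  have LopHT: "Lop \<gamma> \<delta> (hadamard t \<phi>) z = eval_fps (had LT P) z" if "norm z < 1" for z
  proof -
    have "Lop \<gamma> \<delta> (hadamard t \<phi>) z = eval_fps (LF \<gamma> \<delta> (had B C)) z"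
      unfolding hadamard_eval B_def C_def
      by (rule Lop_had[OF radius_had[OF rad_cf[OF ht] rad_cf[OF h\<phi>]] that])
    then show ?thesis by (simp add: LF_had LT_def P_def)
  qed
  have main: "Re (Lop \<gamma> \<delta> (hadamard s \<phi>) z - of_real lam) > norm (Lop \<gamma> \<delta> (hadamard t \<phi>) z)"
    if z: "z \<in> ball 0 1" for z
  proof -
    have nz: "norm z < 1" using z by simp
    define u where "u = eval_fps (had LT P) z"
    obtain \<epsilon> where \<epsilon>: "norm \<epsilon> = 1" "\<epsilon> * u = - of_real (norm u)"
    proof (cases "u = 0")
      case True then show ?thesis using that[of 1] by simp
    next
      case False
      have "(- cnj u / of_real (norm u)) * u = - of_real (norm u)"
      proof -
        have "cnj u * u = of_real ((norm u)^2)" using complex_norm_square[of u] by (simp add: mult.commute)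
        then show ?thesis using False by (simp add: power2_eq_square field_simps)
      qed
      moreover have "norm (- cnj u / of_real (norm u)) = 1" using False by (simp add: norm_divide)
      ultimately show ?thesis using that by blast
    qed
    define Q where "Q = LS + fps_const \<epsilon> * LT - fps_const (of_real lam)"
    have rQ: "1 \<le> fps_conv_radius Q" unfolding Q_def by (intro rad_diff rad_add rad_mult rad_const rLS rLT)
    have evQ: "eval_fps Q w = Lop \<gamma> \<delta> s w + \<epsilon> * Lop \<gamma> \<delta> t w - of_real lam" if "norm w < 1" for w
    proof -
      have r: "\<And>F. 1 \<le> fps_conv_radius F \<Longrightarrow> norm w < fps_conv_radius F" using norm_lt_radius that by blast
      show ?thesis unfolding Q_def LopS[OF that] LopT[OF that]
        by (simp add: eval_fps_add eval_fps_diff eval_fps_mult r rad_add rad_mult rad_const rLS rLT)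
    qed
    have QRe: "0 < Re (eval_fps Q w)" if "norm w < 1" for w
    proof -
      have "Re (\<epsilon> * Lop \<gamma> \<delta> t w) \<ge> - norm (Lop \<gamma> \<delta> t w)"
        using abs_Re_le_cmod[of "\<epsilon> * Lop \<gamma> \<delta> t w"] \<epsilon>(1) by (simp add: norm_mult)
      moreover have "Re (Lop \<gamma> \<delta> s w - of_real lam) > norm (Lop \<gamma> \<delta> t w)" using ineq[of w] that by simp
      ultimately show ?thesis by (simp add: evQ[OF that])
    qed
    define \<rho> where "\<rho> = (1 + norm z) / 2"
    have \<rho>: "norm z < \<rho>" "\<rho> < 1" using nz by (auto simp: \<rho>_def)
    have \<rho>0: "0 < \<rho>" using \<rho>(1) norm_ge_zero[of z] by linarith
    have cQ: "continuous_on (sphere 0 \<rho>) (\<lambda>w. Re (eval_fps Q w))"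
    proof -
      have "continuous_on (ball 0 1) (eval_fps Q)"
        by (rule holomorphic_on_imp_continuous_on[OF hol_eval_fps_ball[OF rQ]])
      then have "continuous_on (sphere 0 \<rho>) (eval_fps Q)"
        by (rule continuous_on_subset) (use \<rho> in auto)
      then show ?thesis by (rule continuous_on_Re)
    qed
    have "sphere (0::complex) \<rho> \<noteq> {}" using \<rho>0 by simp
    then obtain x0 where x0: "x0 \<in> sphere 0 \<rho>" "\<And>y. y \<in> sphere 0 \<rho> \<Longrightarrow> Re (eval_fps Q x0) \<le> Re (eval_fps Q y)"
      using continuous_attains_inf[OF compact_sphere _ cQ] by blast
    define m where "m = Re (eval_fps Q x0)"
    have m0: "0 < m" unfolding m_def by (rule QRe) (use x0(1) \<rho> in simp)
    define Q' where "Q' = Q - fps_const (of_real m)"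
    have rQ': "1 \<le> fps_conv_radius Q'" unfolding Q'_def by (intro rad_diff rad_const rQ)
    have QRe': "0 \<le> Re (eval_fps Q' (of_real \<rho> * E s))" for s
    proof -
      have n: "norm (of_real \<rho> * E s) < 1" using \<rho> \<rho>0 by (simp add: norm_mult)
      have "of_real \<rho> * E s \<in> sphere 0 \<rho>" using \<rho>0 by (simp add: norm_mult)
      then have "m \<le> Re (eval_fps Q (of_real \<rho> * E s))" unfolding m_def by (rule x0(2))
      moreover have "eval_fps Q' (of_real \<rho> * E s) = eval_fps Q (of_real \<rho> * E s) - of_real m"
        unfolding Q'_def by (simp add: eval_fps_diff norm_lt_radius[OF rQ n])
      ultimately show ?thesis by simp
    qed
    have key: "0 \<le> Re (eval_fps (had Q' P) z)"
      by (rule key_ns[OF rQ' rP P0 PRe \<rho> QRe'])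
    have hQ': "had Q' P = had LS P + fps_const \<epsilon> * had LT P - fps_const (of_real lam) - fps_const (of_real m)"
      unfolding Q'_def Q_def by (simp add: had_add had_diff had_cmult had_const[OF P0])
    have r: "\<And>F. 1 \<le> fps_conv_radius F \<Longrightarrow> norm z < fps_conv_radius F" using norm_lt_radius nz by blast
    have rhS: "1 \<le> fps_conv_radius (had LS P)" by (rule radius_had[OF rLS rP])
    have rhT: "1 \<le> fps_conv_radius (had LT P)" by (rule radius_had[OF rLT rP])
    have "eval_fps (had Q' P) z = eval_fps (had LS P) z + \<epsilon> * u - of_real lam - of_real m"
      unfolding hQ' u_def
      by (simp add: eval_fps_add eval_fps_diff eval_fps_mult r rad_add rad_diff rad_mult rad_const rhS rhT)
    then have "0 \<le> Re (eval_fps (had LS P) z) - norm u - lam - m"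
      using key \<epsilon>(2) by simp
    then show ?thesis
      using m0 by (simp add: LopHS[OF nz] LopHT[OF nz] u_def)
  qed
  show ?thesis unfolding RH0_def using classH main by blast
qed

end
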